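(* Let $H$ be a finite index subgroup of $F_2$ which contains an element of odd length, and let $y\in F_2$. Then there is an $N\in\mathbb{N}$ such that the constants $a_{i,xH}$ satisfy $a_{i,xH}=0$ for every $xH\in F_2/H$ and every $i\geq N$.
   Context: $F_2$ is the free group on $a,b$, $\Xi=\{a,b,a^{-1},b^{-1}\}$, and the length of an element is the length of its reduced word in $\Xi$. Sets $\Omega_{k,xH}\subseteq\Xi$ for $k\geq -1$, $xH\in F_2/H$ are defined recursively: $\Omega_{-1,xH}=\varnothing$ for all $xH$; $\Omega_{0,yH}=\Xi$ and $\Omega_{0,xH}=\varnothing$ for $xH\neq yH$; and for $k\geq 0$, $\Omega_{k+1,zH}=\{h\in\Xi:\Omega_{k-1,zH}=\varnothing\text{ and }\Omega_{k,h^{-1}zH}\neq\varnothing\}$. For $i\geq 1$, $a_{i,xH}=|\Omega_{i,xH}|-1$ if $\Omega_{i,xH}\neq\varnothing$ and $a_{i,xH}=0$ otherwise. (These are the constants for which $|yH\cap S_n|=\sum_{i=1}^{n-1}\sum_{xH}a_{i,xH}|xH\cap S_{n-i}|$ for $n\geq2$, where $S_n$ is the set of elements of length $n$.) *)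

theory Defs
  imports "HOL-Algebra.Coset"
begin

text \<open>The free group F_2 on a, b, realised as reduced words over the
alphabet Xi = {a, b, a^-1, b^-1}. A letter is a pair (generator, sign),
sign True meaning the positive generator.\<close>

datatype gen = GA | GB

type_synonym letter = "gen \<times> bool"

definition inv_letter :: "letter \<Rightarrow> letter" where
  "inv_letter x = (fst x, \<not> snd x)"

definition reduced :: "letter list \<Rightarrow> bool" where
  "reduced w \<longleftrightarrow> (\<forall>i. Suc i < length w \<longrightarrow> w ! Suc i \<noteq> inv_letter (w ! i))"

fun red :: "letter list \<Rightarrow> letter list" where
  "red [] = []"
| "red (x # xs) = (case red xs of
      [] \<Rightarrow> [x]
    | y # ys \<Rightarrow> (if y = inv_letter x then ys else x # y # ys))"

definition F2 :: "letter list monoid" where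
  "F2 = \<lparr>carrier = {w. reduced w}, mult = (\<lambda>u v. red (u @ v)), one = []\<rparr>"

definition wlen :: "letter list \<Rightarrow> nat" where
  "wlen w = length w"

definition lcosets_F2 :: "letter list set \<Rightarrow> letter list set set" where
  "lcosets_F2 H = {x <#\<^bsub>F2\<^esub> H | x. x \<in> carrier F2}"

text \<open>Om H y n C is Omega_{n-1, C}; so Om H y 0 C = Omega_{-1,C} = {}.
The letter h, as a group element, is the one-letter word [h]; h^-1 zH is
the left coset [inv_letter h] <# zH.\<close>
fun Om :: "letter list set \<Rightarrow> letter list \<Rightarrow> nat \<Rightarrow> letter list set \<Rightarrow> letter set" where
  "Om H y 0 C = {}"
| "Om H y (Suc 0) C = (if C = y <#\<^bsub>F2\<^esub> H then UNIV else {})"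
| "Om H y (Suc (Suc n)) C =
     {h. Om H y n C = {} \<and> Om H y (Suc n) ([inv_letter h] <#\<^bsub>F2\<^esub> C) \<noteq> {}}"

definition Omega :: "letter list set \<Rightarrow> letter list \<Rightarrow> nat \<Rightarrow> letter list set \<Rightarrow> letter set" where
  "Omega H y k C = Om H y (Suc k) C"

definition a_const :: "letter list set \<Rightarrow> letter list \<Rightarrow> nat \<Rightarrow> letter list set \<Rightarrow> nat" where
  "a_const H y i C = (if Omega H y i C \<noteq> {} then card (Omega H y i C) - 1 else 0)"

end

theory Submission
  imports Defs
begin

lemma inv_inv [simp]: "inv_letter (inv_letter x) = x"
  by (simp add: inv_letter_def)

lemma reduced_Nil [simp]: "reduced []" and reduced_single [simp]: "reduced [x]"
  by (auto simp: reduced_def)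

lemma reduced_Cons2 [simp]: "reduced (x # y # ys) \<longleftrightarrow> y \<noteq> inv_letter x \<and> reduced (y # ys)"
proof
  assume A: "reduced (x # y # ys)"
  have "y \<noteq> inv_letter x" using A[unfolded reduced_def, rule_format, of 0] by simp
  moreover have "reduced (y # ys)"
    unfolding reduced_def
  proof (intro allI impI)
    fix i assume "Suc i < length (y # ys)"
    then show "(y # ys) ! Suc i \<noteq> inv_letter ((y # ys) ! i)"
      using A[unfolded reduced_def, rule_format, of "Suc i"] by simp
  qed
  ultimately show "y \<noteq> inv_letter x \<and> reduced (y # ys)" by blast
next
  assume B: "y \<noteq> inv_letter x \<and> reduced (y # ys)"
  show "reduced (x # y # ys)"
    unfolding reduced_def
  proof (intro allI impI)
    fix i assume i: "Suc i < length (x # y # ys)"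
    show "(x # y # ys) ! Suc i \<noteq> inv_letter ((x # y # ys) ! i)"
    proof (cases i)
      case 0 then show ?thesis using B by simp
    next
      case (Suc j)
      then show ?thesis using i B[THEN conjunct2, unfolded reduced_def, rule_format, of j] by simp
    qed
  qed
qed

lemma reduced_tl: "reduced (x # xs) \<Longrightarrow> reduced xs"
  by (cases xs) auto

lemma red_reduced: "reduced (red w)"
proof (induction w)
  case Nil then show ?case by simp
next
  case (Cons x xs)
  then show ?case
    by (auto split: list.splits dest: reduced_tl)
qed

lemma red_id: "reduced w \<Longrightarrow> red w = w"
proof (induction w)
  case Nil then show ?case by simp
next
  case (Cons x xs)
  then show ?case
    by (cases xs) (auto dest: reduced_tl)
qed

lemma red_red [simp]: "red (red w) = red w"
  by (simp add: red_id red_reduced)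

lemma red_cancel: "red (x # inv_letter x # q) = red q"
proof -
  have R: "reduced (red q)" by (rule red_reduced)
  show ?thesis
  proof (cases "red q")
    case Nil then show ?thesis by simp
  next
    case (Cons y ys)
    show ?thesis
    proof (cases "y = x")
      case True
      with Cons R have "reduced (x # ys)" by simp
      then have "red (x # ys) = x # ys" by (rule red_id)
      moreover have "red ys = ys" using R Cons by (metis red_id reduced_tl)
      ultimately show ?thesis using Cons True by simp
    next
      case False
      then show ?thesis using Cons by simp
    qed
  qed
qed

lemma red_app_red: "red (p @ q) = red (p @ red q)"
  by (induction p) auto

lemma red_Cons_red: "red (a # w) = red (a # red w)"
  by (simp only: red.simps red_red)

lemma red_red_app: "red (red u @ v) = red (u @ v)"
proof (induction u)
  case Nil
  have "red (red [] @ v) = red v" by simp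
  then show ?case by simp
next
  case (Cons a u)
  have e: "red ((a # u) @ v) = red (a # (red u @ v))"
  proof -
    have "red ((a # u) @ v) = red (a # red (u @ v))" using red_Cons_red[of a "u @ v"] by simp
    also have "\<dots> = red (a # red (red u @ v))" using Cons.IH by simp
    also have "\<dots> = red (a # (red u @ v))" using red_Cons_red[of a "red u @ v"] by simp
    finally show ?thesis .
  qed
  show ?case
  proof (cases "red u")
    case Nil
    then have "red (a # u) = [a]" by (simp only: red.simps list.case)
    then show ?thesis using e Nil by simp
  next
    case (Cons y ys)
    show ?thesis
    proof (cases "y = inv_letter a")
      case True
      then have "red (a # u) = ys" using Cons by (simp only: red.simps list.case if_True simp_thms)
      moreover have "red (a # (red u @ v)) = red (ys @ v)"
        using Cons True red_cancel[of a "ys @ v"] by simp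
      ultimately show ?thesis using e by simp
    next
      case False
      then have "red (a # u) = a # red u" using Cons by (simp only: red.simps list.case if_False)
      then show ?thesis using e by simp
    qed
  qed
qed

declare red.simps(2)[simp del]

lemma l_coset_F2: "x <#\<^bsub>F2\<^esub> C = (\<lambda>c. red (x @ c)) ` C"
  by (auto simp: l_coset_def F2_def)

definition lm :: "letter \<Rightarrow> letter list set \<Rightarrow> letter list set" where
  "lm l C = [l] <#\<^bsub>F2\<^esub> C"

lemma lm_eq: "lm l C = (\<lambda>c. red (l # c)) ` C"
  by (simp add: lm_def l_coset_F2)

definition good :: "letter list set \<Rightarrow> bool" where
  "good C \<longleftrightarrow> (\<forall>c\<in>C. reduced c)"

lemma good_lm: "good (lm l C)"
  by (auto simp: good_def lm_eq red_reduced)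

lemma lm_inv: "good C \<Longrightarrow> lm (inv_letter l) (lm l C) = C"
proof -
  assume g: "good C"
  have "red (inv_letter l # red (l # c)) = c" if "c \<in> C" for c
  proof -
    have "red (inv_letter l # red (l # c)) = red (inv_letter l # l # c)"
      using red_app_red[of "[inv_letter l]" "l # c"] by simp
    also have "\<dots> = red c" using red_cancel[of "inv_letter l" c] by simp
    also have "\<dots> = c" using g that by (simp add: good_def red_id)
    finally show ?thesis .
  qed
  then show ?thesis by (force simp: lm_eq image_comp)
qed

lemma lm_coset: "lm l (x <#\<^bsub>F2\<^esub> H) = red (l # x) <#\<^bsub>F2\<^esub> H"
proof -
  have "red (l # red (x @ h)) = red (red (l # x) @ h)" for h
    using red_app_red[of "[l]" "x @ h"] red_red_app[of "l # x" h] by simp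
  then show ?thesis by (simp add: lm_eq l_coset_F2 image_comp)
qed

lemma good_coset: "good (x <#\<^bsub>F2\<^esub> H)"
  by (auto simp: good_def l_coset_F2 red_reduced)

fun RR :: "letter list set \<Rightarrow> letter list \<Rightarrow> nat \<Rightarrow> letter list set set" where
  "RR H y 0 = {y <#\<^bsub>F2\<^esub> H}"
| "RR H y (Suc n) = {lm l C | l C. C \<in> RR H y n}"

lemma RR_SucI: "C \<in> RR H y n \<Longrightarrow> lm l C \<in> RR H y (Suc n)"
  unfolding RR.simps by blast

lemma RR_SucE: "C \<in> RR H y (Suc n) \<Longrightarrow> \<exists>l D. C = lm l D \<and> D \<in> RR H y n"
  unfolding RR.simps by blast

lemma RR_good: "C \<in> RR H y n \<Longrightarrow> good C"
  by (induction n arbitrary: C) (auto simp: good_coset good_lm)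

lemma RR_lc: "y \<in> carrier F2 \<Longrightarrow> C \<in> RR H y n \<Longrightarrow> C \<in> lcosets_F2 H"
proof (induction n arbitrary: C)
  case 0 then show ?case by (auto simp: lcosets_F2_def)
next
  case (Suc n)
  then obtain l D where "C = lm l D" "D \<in> RR H y n" by auto
  then obtain x where "D = x <#\<^bsub>F2\<^esub> H" using Suc unfolding lcosets_F2_def by blast
  then have "C = red (l # x) <#\<^bsub>F2\<^esub> H" using \<open>C = lm l D\<close> lm_coset by simp
  moreover have "red (l # x) \<in> carrier F2" by (simp add: F2_def red_reduced)
  ultimately show ?case unfolding lcosets_F2_def by blast
qed

lemma RR_mono2: "RR H y n \<subseteq> RR H y (Suc (Suc n))"
proof
  fix C assume C: "C \<in> RR H y n"
  have "lm l C \<in> RR H y (Suc n)" for l using C by (rule RR_SucI)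
  then have "lm (inv_letter l) (lm l C) \<in> RR H y (Suc (Suc n))" for l by (rule RR_SucI)
  then show "C \<in> RR H y (Suc (Suc n))" using lm_inv[OF RR_good[OF C]] by metis
qed

declare RR.simps(2)[simp del]

lemma Om_lm: "Om H y (Suc (Suc n)) C =
     {h. Om H y n C = {} \<and> Om H y (Suc n) (lm (inv_letter h) C) \<noteq> {}}"
  by (simp add: lm_def)

lemma Om_iff:
  "good C \<Longrightarrow> (Om H y (Suc k) C \<noteq> {}) \<longleftrightarrow> (C \<in> RR H y k \<and> (2 \<le> k \<longrightarrow> C \<notin> RR H y (k - 2)))"
proof (induction k arbitrary: C rule: less_induct)
  case (less k)
  show ?case
  proof (cases k)
    case 0 then show ?thesis by simp
  next
    case (Suc k')
    show ?thesis
    proof (cases k')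
      case 0
      have K: "good (y <#\<^bsub>F2\<^esub> H)" by (rule good_coset)
      have "Om H y (Suc k) C \<noteq> {} \<longleftrightarrow> (\<exists>h. lm (inv_letter h) C = y <#\<^bsub>F2\<^esub> H)"
        using Suc 0 by (simp only: Om_lm) simp
      also have "\<dots> \<longleftrightarrow> C \<in> RR H y k"
      proof
        assume "\<exists>h. lm (inv_letter h) C = y <#\<^bsub>F2\<^esub> H"
        then obtain h where "lm (inv_letter h) C = y <#\<^bsub>F2\<^esub> H" by blast
        then have "C = lm h (y <#\<^bsub>F2\<^esub> H)" using lm_inv[OF less.prems, of "inv_letter h"] by simp
        then show "C \<in> RR H y k" using Suc 0 RR_SucI[of "y <#\<^bsub>F2\<^esub> H" H y 0 h] by simp
      next
        assume "C \<in> RR H y k"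
        then obtain l where "C = lm l (y <#\<^bsub>F2\<^esub> H)" using Suc 0 RR_SucE[of C H y 0] by auto
        then show "\<exists>h. lm (inv_letter h) C = y <#\<^bsub>F2\<^esub> H" using lm_inv[OF K] by blast
      qed
      finally show ?thesis using Suc 0 by simp
    next
      case (Suc m)
      note k = \<open>k = Suc k'\<close> \<open>k' = Suc m\<close>
      have IHm: "Om H y (Suc m) D \<noteq> {} \<longleftrightarrow> (D \<in> RR H y m \<and> (2 \<le> m \<longrightarrow> D \<notin> RR H y (m - 2)))"
        if "good D" for D using less.IH[of m D] that k by simp
      have IHs: "Om H y (Suc (Suc m)) D \<noteq> {} \<longleftrightarrow> (D \<in> RR H y (Suc m) \<and> (2 \<le> Suc m \<longrightarrow> D \<notin> RR H y (m - 1)))"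
        if "good D" for D using less.IH[of "Suc m" D] that k by simp
      have Om: "Om H y (Suc k) C = {h. Om H y (Suc m) C = {} \<and> Om H y (Suc (Suc m)) (lm (inv_letter h) C) \<noteq> {}}"
        using Om_lm[of H y "Suc m" C] k by (simp only:)
      show ?thesis
      proof
        assume "Om H y (Suc k) C \<noteq> {}"
        then obtain h where "h \<in> {h. Om H y (Suc m) C = {} \<and> Om H y (Suc (Suc m)) (lm (inv_letter h) C) \<noteq> {}}"
          unfolding Om by blast
        then have "Om H y (Suc m) C = {} \<and> Om H y (Suc (Suc m)) (lm (inv_letter h) C) \<noteq> {}"
          by (rule CollectD)
        then have h1: "Om H y (Suc m) C = {}" and h2: "Om H y (Suc (Suc m)) (lm (inv_letter h) C) \<noteq> {}"
          by blast+
        define D where "D = lm (inv_letter h) C"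
        have gD: "good D" by (simp add: D_def good_lm)
        have D1: "D \<in> RR H y (Suc m)" and D2: "1 \<le> m \<Longrightarrow> D \<notin> RR H y (m - 1)"
          using IHs[OF gD] h2 D_def by auto
        have CD: "C = lm h D" using lm_inv[OF less.prems, of "inv_letter h"] D_def by simp
        have C1: "C \<in> RR H y k" using CD RR_SucI[OF D1, of h] k by simp
        have "C \<notin> RR H y m"
        proof
          assume Cm: "C \<in> RR H y m"
          with h1 IHm[OF less.prems] have m2: "2 \<le> m" and "C \<in> RR H y (m - 2)" by auto
          then have "D \<in> RR H y (Suc (m - 2))" using D_def RR_SucI by blast
          moreover have "Suc (m - 2) = m - 1" using m2 by simp
          ultimately show False using D2 m2 by simp
        qed
        then show "C \<in> RR H y k \<and> (2 \<le> k \<longrightarrow> C \<notin> RR H y (k - 2))" using C1 k by simp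
      next
        assume A: "C \<in> RR H y k \<and> (2 \<le> k \<longrightarrow> C \<notin> RR H y (k - 2))"
        then obtain l D where CD: "C = lm l D" and D: "D \<in> RR H y (Suc m)" using k RR_SucE[of C H y "Suc m"] by blast
        have CnR: "C \<notin> RR H y m" using A k by simp
        have gD: "good D" using RR_good[OF D] .
        have DC: "lm (inv_letter l) C = D" using CD lm_inv[OF gD] by simp
        have "D \<notin> RR H y (m - 1)" if "1 \<le> m"
        proof
          assume "D \<in> RR H y (m - 1)"
          then have "C \<in> RR H y (Suc (m - 1))" using CD RR_SucI by blast
          then show False using CnR that by simp
        qed
        then have "Om H y (Suc (Suc m)) D \<noteq> {}" using IHs[OF gD] D by auto
        moreover have "Om H y (Suc m) C = {}" using IHm[OF less.prems] CnR by auto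
        ultimately have "l \<in> Om H y (Suc k) C" using Om DC by simp
        then show "Om H y (Suc k) C \<noteq> {}" by blast
      qed
    qed
  qed
qed

lemma chain_stab:
  fixes E :: "nat \<Rightarrow> 'a set"
  assumes inc: "\<And>j. E j \<subseteq> E (Suc j)" and sub: "\<And>j. E j \<subseteq> S" and fin: "finite S"
  shows "\<exists>j0. \<forall>j\<ge>j0. E j = E j0"
proof -
  have mono: "E i \<subseteq> E j" if "i \<le> j" for i j
    using lift_Suc_mono_le[of E, OF inc that] .
  let ?U = "\<Union>j. E j"
  have finU: "finite ?U" using sub fin by (meson UN_least finite_subset)
  define f where "f C = (SOME j. C \<in> E j)" for C
  have f: "C \<in> E (f C)" if "C \<in> ?U" for C using that unfolding f_def by (metis UN_E someI_ex)
  define j0 where "j0 = Max (insert 0 (f ` ?U))"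
  have "?U \<subseteq> E j0"
  proof
    fix C assume C: "C \<in> ?U"
    have "f C \<le> j0" unfolding j0_def using finU C by (intro Max_ge) auto
    then show "C \<in> E j0" using mono f[OF C] by blast
  qed
  then have "\<forall>j\<ge>j0. E j = E j0" using mono by blast
  then show ?thesis by blast
qed

theorem theorem5p1:
  fixes H :: "letter list set" and y :: "letter list"
  assumes "subgroup H F2"
    and "finite (lcosets_F2 H)"
    and "\<exists>w\<in>H. odd (wlen w)"
    and "y \<in> carrier F2"
  shows "\<exists>N::nat. \<forall>C\<in>lcosets_F2 H. \<forall>i\<ge>N. a_const H y i C = 0"
proof -
  obtain j0 where j0: "\<forall>j\<ge>j0. RR H y (2 * j) = RR H y (2 * j0)"
    using chain_stab[of "\<lambda>j. RR H y (2 * j)" "lcosets_F2 H"] RR_mono2[of H y] RR_lc[OF assms(4)] assms(2)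
    by (metis mult_Suc_right add_2_eq_Suc subsetI)
  obtain j1 where j1: "\<forall>j\<ge>j1. RR H y (2 * j + 1) = RR H y (2 * j1 + 1)"
    using chain_stab[of "\<lambda>j. RR H y (2 * j + 1)" "lcosets_F2 H"] RR_mono2[of H y] RR_lc[OF assms(4)] assms(2)
    by (metis mult_Suc_right add_2_eq_Suc Suc_eq_plus1 add_Suc subsetI)
  have stab: "RR H y i = RR H y (i - 2)" if "i \<ge> 2 * (j0 + j1) + 2" for i
  proof (cases "even i")
    case True
    then obtain j where i: "i = 2 * j" by blast
    then have "j \<ge> j0 + 1" using that by simp
    then have "RR H y (2 * j) = RR H y (2 * (j - 1))" using j0[rule_format, of j] j0[rule_format, of "j - 1"] by (simp del: RR.simps)
    moreover have "2 * (j - 1) = i - 2" using i by simp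
    ultimately show ?thesis using i by (simp del: RR.simps)
  next
    case False
    then obtain j where i: "i = 2 * j + 1" using oddE by blast
    then have "j \<ge> j1 + 1" using that by simp
    then have "RR H y (2 * j + 1) = RR H y (2 * (j - 1) + 1)" using j1[rule_format, of j] j1[rule_format, of "j - 1"] by (simp del: RR.simps)
    moreover have "2 * (j - 1) + 1 = i - 2" using i \<open>j \<ge> j1 + 1\<close> by simp
    ultimately show ?thesis using i by (simp del: RR.simps)
  qed
  show ?thesis
  proof (intro exI ballI allI impI)
    fix C i assume C: "C \<in> lcosets_F2 H" and i: "2 * (j0 + j1) + 2 \<le> i"
    have g: "good C" using C good_coset by (auto simp: lcosets_F2_def)
    have "Om H y (Suc i) C = {}"
      using Om_iff[OF g, of H y i] stab[OF i] i by auto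
    then show "a_const H y i C = 0" by (simp add: a_const_def Omega_def)
  qed
qed

end
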